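(* Let $\varphi$ be a $w^*$-continuous positive linear map on $B(\mathcal H)$ and let $A\in B(\mathcal H)$ be selfadjoint with $\varphi(A)\le A$. Let $A=B+C$ be the unique decomposition with $B=B^*$, $\varphi(B)=B$, and $C\ge0$, $\varphi(C)\le C$, $\varphi^k(C)\to0$ strongly as $k\to\infty$. Then $$\text{SOT-}\lim_{k\to\infty}\frac{\varphi^0(A)+\varphi^1(A)+\cdots+\varphi^{k-1}(A)}{k}=B.$$
   Context: $\varphi^0$ denotes the identity map. *)

theory Defs
  imports "HOL-Analysis.Analysis"
begin

class cvec_space = real_vector +
  fixes scaleC :: "complex \<Rightarrow> 'a \<Rightarrow> 'a"
  assumes scaleC_add_right: "scaleC a (x + y) = scaleC a x + scaleC a y"
    and scaleC_add_left: "scaleC (a + b) x = scaleC a x + scaleC b x"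
    and scaleC_scaleC: "scaleC a (scaleC b x) = scaleC (a * b) x"
    and scaleC_one: "scaleC 1 x = x"
    and scaleR_scaleC: "scaleR r x = scaleC (complex_of_real r) x"

text \<open>Complex inner product, linear in the second and conjugate-linear in the first argument;
  the norm is the one induced by the inner product.\<close>
class cinner_space = cvec_space + real_normed_vector +
  fixes cinner :: "'a \<Rightarrow> 'a \<Rightarrow> complex"
  assumes cinner_conj: "cinner x y = cnj (cinner y x)"
    and cinner_add_right: "cinner x (y + z) = cinner x y + cinner x z"
    and cinner_scaleC_right: "cinner x (scaleC c y) = c * cinner x y"
    and cinner_self_nonneg: "Im (cinner x x) = 0 \<and> 0 \<le> Re (cinner x x)"
    and cinner_self_eq_0: "cinner x x = 0 \<longleftrightarrow> x = 0"
    and norm_cinner: "norm x = sqrt (Re (cinner x x))"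

class chilbert_space = cinner_space + complete_space

definition bounded_op :: "('a::chilbert_space \<Rightarrow> 'a) \<Rightarrow> bool" where
  "bounded_op T \<longleftrightarrow> bounded_linear T \<and> (\<forall>c x. T (scaleC c x) = scaleC c (T x))"

definition selfadjoint_op :: "('a::chilbert_space \<Rightarrow> 'a) \<Rightarrow> bool" where
  "selfadjoint_op T \<longleftrightarrow> bounded_op T \<and> (\<forall>x y. cinner (T x) y = cinner x (T y))"

definition positive_op :: "('a::chilbert_space \<Rightarrow> 'a) \<Rightarrow> bool" where
  "positive_op T \<longleftrightarrow> bounded_op T \<and>
     (\<forall>x. Im (cinner x (T x)) = 0 \<and> 0 \<le> Re (cinner x (T x)))"

definition op_le :: "('a::chilbert_space \<Rightarrow> 'a) \<Rightarrow> ('a \<Rightarrow> 'a) \<Rightarrow> bool" where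
  "op_le S T \<longleftrightarrow> positive_op (\<lambda>x. T x - S x)"

definition linear_map_BH :: "(('a::chilbert_space \<Rightarrow> 'a) \<Rightarrow> ('a \<Rightarrow> 'a)) \<Rightarrow> bool" where
  "linear_map_BH \<phi> \<longleftrightarrow>
     (\<forall>T. bounded_op T \<longrightarrow> bounded_op (\<phi> T)) \<and>
     (\<forall>S T. bounded_op S \<longrightarrow> bounded_op T \<longrightarrow> \<phi> (\<lambda>x. S x + T x) = (\<lambda>x. \<phi> S x + \<phi> T x)) \<and>
     (\<forall>c T. bounded_op T \<longrightarrow> \<phi> (\<lambda>x. scaleC c (T x)) = (\<lambda>x. scaleC c (\<phi> T x)))"

definition positive_map_BH :: "(('a::chilbert_space \<Rightarrow> 'a) \<Rightarrow> ('a \<Rightarrow> 'a)) \<Rightarrow> bool" where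
  "positive_map_BH \<phi> \<longleftrightarrow> (\<forall>T. positive_op T \<longrightarrow> positive_op (\<phi> T))"

text \<open>The weak* (sigma-weak, ultraweak) topology on B(H): the weak topology induced by the
  functionals \<open>T \<mapsto> \<Sum>n. \<langle>x n, T (y n)\<rangle>\<close> with \<open>\<Sum>n. \<parallel>x n\<parallel>\<^sup>2 < \<infinity>\<close> and \<open>\<Sum>n. \<parallel>y n\<parallel>\<^sup>2 < \<infinity>\<close>
  (i.e. the predual action of trace-class operators).\<close>
definition wstar_functional :: "(nat \<Rightarrow> 'a::chilbert_space) \<Rightarrow> (nat \<Rightarrow> 'a) \<Rightarrow> ('a \<Rightarrow> 'a) \<Rightarrow> complex" where
  "wstar_functional x y T = (\<Sum>n. cinner (x n) (T (y n)))"

definition wstar_topology :: "('a::chilbert_space \<Rightarrow> 'a) topology" where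
  "wstar_topology = topology_generated_by
     {{T. bounded_op T \<and> wstar_functional x y T \<in> U} | x y U.
        summable (\<lambda>n. (norm (x n))\<^sup>2) \<and> summable (\<lambda>n. (norm (y n))\<^sup>2) \<and> open U}"

definition wstar_continuous :: "(('a::chilbert_space \<Rightarrow> 'a) \<Rightarrow> ('a \<Rightarrow> 'a)) \<Rightarrow> bool" where
  "wstar_continuous \<phi> \<longleftrightarrow> continuous_map wstar_topology wstar_topology \<phi>"

definition SOT_tendsto :: "(nat \<Rightarrow> ('a::chilbert_space \<Rightarrow> 'a)) \<Rightarrow> ('a \<Rightarrow> 'a) \<Rightarrow> bool" where
  "SOT_tendsto T L \<longleftrightarrow> (\<forall>x. (\<lambda>k. T k x) \<longlonglongrightarrow> L x)"

end

theory Submission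
  imports Defs
begin

lemma cesaro_zero:
  fixes u :: "nat \<Rightarrow> 'a::real_normed_vector"
  assumes "u \<longlonglongrightarrow> 0"
  shows "(\<lambda>n. (1 / real n) *\<^sub>R (\<Sum>j<n. u j)) \<longlonglongrightarrow> 0"
proof (rule LIMSEQ_I)
  fix r :: real assume r: "0 < r"
  obtain N where N: "\<And>j. j \<ge> N \<Longrightarrow> norm (u j) < r / 2"
    using LIMSEQ_D[OF assms, of "r/2"] r by auto
  define M where "M = (\<Sum>j<N. norm (u j))"
  have M0: "M \<ge> 0" unfolding M_def by (simp add: sum_nonneg)
  obtain K :: nat where K: "real K > 2 * M / r" using reals_Archimedean2 by blast
  show "\<exists>no. \<forall>n\<ge>no. norm ((1 / real n) *\<^sub>R (\<Sum>j<n. u j) - 0) < r"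
  proof (intro exI allI impI)
    fix n assume n: "n \<ge> max (Suc N) K"
    have npos: "real n > 0" using n by auto
    have split: "{..<n} = {..<N} \<union> {N..<n}" using n by auto
    have "norm (\<Sum>j<n. u j) \<le> (\<Sum>j<n. norm (u j))" by (rule norm_sum)
    also have "\<dots> = M + (\<Sum>j\<in>{N..<n}. norm (u j))"
      unfolding M_def split by (subst sum.union_disjoint) auto
    also have "(\<Sum>j\<in>{N..<n}. norm (u j)) \<le> (\<Sum>j\<in>{N..<n}. r/2)"
      using N by (intro sum_mono) (auto simp: less_imp_le)
    also have "\<dots> = real (n - N) * (r/2)" by simp
    also have "\<dots> \<le> real n * (r/2)" using r by (intro mult_right_mono) auto
    finally have bnd: "norm (\<Sum>j<n. u j) \<le> M + real n * (r/2)" by simp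
    have "M < real n * r / 2"
    proof -
      have "2 * M / r < real n" using K n by linarith
      then show ?thesis using r by (simp add: field_simps)
    qed
    then have "norm (\<Sum>j<n. u j) < real n * r" using bnd by linarith
    then show "norm ((1 / real n) *\<^sub>R (\<Sum>j<n. u j) - 0) < r"
      using npos by (simp add: field_simps)
  qed
qed

theorem theorem3p2:
  fixes \<phi> :: "('a::chilbert_space \<Rightarrow> 'a) \<Rightarrow> ('a \<Rightarrow> 'a)"
    and A B C :: "'a \<Rightarrow> 'a"
  assumes "linear_map_BH \<phi>" and "positive_map_BH \<phi>" and "wstar_continuous \<phi>"
    and "selfadjoint_op A" and "op_le (\<phi> A) A"
    and "\<forall>x. A x = B x + C x"
    and "selfadjoint_op B" and "\<phi> B = B"
    and "positive_op C" and "op_le (\<phi> C) C"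
    and "SOT_tendsto (\<lambda>k. (\<phi> ^^ k) C) (\<lambda>x. 0)"
  shows "SOT_tendsto (\<lambda>k x. (1 / real k) *\<^sub>R (\<Sum>j<k. (\<phi> ^^ j) A x)) B"
proof -
  have lin: "\<And>S T. bounded_op S \<Longrightarrow> bounded_op T \<Longrightarrow> \<phi> (\<lambda>x. S x + T x) = (\<lambda>x. \<phi> S x + \<phi> T x)"
    and bd: "\<And>T. bounded_op T \<Longrightarrow> bounded_op (\<phi> T)"
    using assms(1) unfolding linear_map_BH_def by blast+
  have bB: "bounded_op B" using assms(7) unfolding selfadjoint_op_def by blast
  have bC: "bounded_op C" using assms(9) unfolding positive_op_def by blast
  have bCj: "bounded_op ((\<phi> ^^ j) C)" for j
    by (induction j) (use bC bd in auto)
  have Aeq: "A = (\<lambda>x. B x + C x)" using assms(6) by auto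
  have key: "(\<phi> ^^ j) A = (\<lambda>x. B x + (\<phi> ^^ j) C x)" for j
  proof (induction j)
    case 0 then show ?case using Aeq by simp
  next
    case (Suc j)
    have "(\<phi> ^^ Suc j) A = \<phi> (\<lambda>x. B x + (\<phi> ^^ j) C x)" using Suc by simp
    also have "\<dots> = (\<lambda>x. \<phi> B x + \<phi> ((\<phi> ^^ j) C) x)" using lin[OF bB bCj] .
    finally show ?case using assms(8) by simp
  qed
  show ?thesis unfolding SOT_tendsto_def
  proof
    fix x
    have c: "(\<lambda>j. (\<phi> ^^ j) C x) \<longlonglongrightarrow> 0" using assms(11) unfolding SOT_tendsto_def by blast
    have c2: "(\<lambda>k. (1 / real k) *\<^sub>R (\<Sum>j<k. (\<phi> ^^ j) C x)) \<longlonglongrightarrow> 0"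
      by (rule cesaro_zero[OF c])
    have e: "(1 / real k) *\<^sub>R (\<Sum>j<k. (\<phi> ^^ j) A x)
        = (1 / real k) *\<^sub>R (\<Sum>j<k. (\<phi> ^^ j) C x) + (if k = 0 then 0 else B x)" for k
      by (simp add: key sum.distrib scaleR_add_right scaleR_sum_right[symmetric] sum_constant_scaleR)
    have "(\<lambda>k. (1 / real k) *\<^sub>R (\<Sum>j<k. (\<phi> ^^ j) C x) + B x) \<longlonglongrightarrow> B x"
      using tendsto_add[OF c2 tendsto_const[of "B x"]] by simp
    then have "(\<lambda>k. (1 / real k) *\<^sub>R (\<Sum>j<k. (\<phi> ^^ j) A x)) \<longlonglongrightarrow> B x"
    proof (rule Lim_transform_eventually)
      show "\<forall>\<^sub>F k in sequentially. (1 / real k) *\<^sub>R (\<Sum>j<k. (\<phi> ^^ j) C x) + B x = (1 / real k) *\<^sub>R (\<Sum>j<k. (\<phi> ^^ j) A x)"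
        using eventually_gt_at_top[of 0] by eventually_elim (simp add: e)
    qed
    then show "(\<lambda>k. (1 / real k) *\<^sub>R (\<Sum>j<k. (\<phi> ^^ j) A x)) \<longlonglongrightarrow> B x" .
  qed
qed

end
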